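(* Let $\mu>0$. For $T_0\in\mathcal T_{\rm fin}$ of height $r$ with $K=|D_r(T_0)|$ define $$\Xi(T_0)=e^{-\mu(r-1)}4^{-|T_0|}2^{K+1}\sum_{R=1}^K\binom KR\frac{\mu^{R-1}}{(R-1)!}.$$ Then $\sum_{T_0\in\mathcal T_{\rm fin}:\,h(T_0)=r}\Xi(T_0)=1$ for every $r\ge1$.
   Context: Rooted planar trees (root of degree 1); $D_r(T)$ = vertices at height $r$; $|T|$ = number of edges; $h(T)$ = height; $\mathcal T_{\rm fin}$ = finite trees. *)

theory Defs
  imports "HOL-Analysis.Analysis"
begin

text \<open>Finite rooted planar (ordered) trees: a vertex with an ordered list of subtrees.\<close>
datatype ptree = Node "ptree list"

fun edges :: "ptree \<Rightarrow> nat" where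
  "edges (Node ts) = sum_list (map (\<lambda>t. Suc (edges t)) ts)"

fun height :: "ptree \<Rightarrow> nat" where
  "height (Node ts) = foldr max (map (\<lambda>t. Suc (height t)) ts) 0"

text \<open>Number of vertices at distance n from the root, i.e. the cardinality of D_n(T).\<close>
fun level_count :: "nat \<Rightarrow> ptree \<Rightarrow> nat" where
  "level_count 0 t = 1"
| "level_count (Suc n) (Node ts) = sum_list (map (level_count n) ts)"

text \<open>The trees of T_fin: root of degree 1.\<close>
definition planted :: "ptree \<Rightarrow> bool" where
  "planted T \<longleftrightarrow> (\<exists>t. T = Node [t])"

definition Xi :: "real \<Rightarrow> ptree \<Rightarrow> real" where
  "Xi \<mu> T = (let r = height T; K = level_count r T in
     exp (- \<mu> * (real r - 1)) * (1/4) ^ edges T * 2 ^ (K + 1) *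
     (\<Sum>R = 1..K. real (K choose R) * \<mu> ^ (R - 1) / fact (R - 1)))"

end

theory Submission
  imports Defs
begin


lemma height_Node_le: "height (Node ts) \<le> Suc n \<longleftrightarrow> (\<forall>t\<in>set ts. height t \<le> n)"
  by (induction ts) auto

lemma height_sub: "t \<in> set ts \<Longrightarrow> Suc (height t) \<le> height (Node ts)"
  by (induction ts) auto

lemma height_le_0: "height t \<le> 0 \<longleftrightarrow> t = Node []"
proof (cases t)
  case (Node ts) then show ?thesis by (cases ts) auto
qed

lemma level_lt: "height t < n \<Longrightarrow> level_count n t = 0"
proof (induction t arbitrary: n)
  case (Node ts)
  show ?case
  proof (cases n)
    case 0 then show ?thesis using Node.prems by simp
  next
    case (Suc m)
    have "\<forall>t\<in>set ts. level_count m t = 0"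
    proof
      fix t assume "t \<in> set ts"
      moreover have "height t < m" using height_sub[OF \<open>t \<in> set ts\<close>] Node.prems Suc by simp
      ultimately show "level_count m t = 0" using Node.IH by blast
    qed
    then show ?thesis using Suc by (simp add: sum_list_eq_0_iff) 
  qed
qed

lemma weight_Node:
  "(1/4::real) ^ edges (Node ts) * y ^ level_count (Suc n) (Node ts)
   = prod_list (map (\<lambda>t. (1/4) * ((1/4) ^ edges t * y ^ level_count n t)) ts)"
  by (induction ts) (simp_all add: power_add algebra_simps)




lemma has_sum_prod_nonneg:
  fixes g h :: "_ \<Rightarrow> real"
  assumes "(g has_sum s) A" "(h has_sum S) B"
    and "\<And>a. a \<in> A \<Longrightarrow> g a \<ge> 0" "\<And>b. b \<in> B \<Longrightarrow> h b \<ge> 0"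
  shows "((\<lambda>(a,b). g a * h b) has_sum (s * S)) (A \<times> B)"
proof -
  have inner: "\<And>a. a \<in> A \<Longrightarrow> ((\<lambda>b. (\<lambda>(a,b). g a * h b) (a, b)) has_sum g a * S) B"
    using has_sum_cmult_right[OF assms(2)] by simp
  have outer: "((\<lambda>a. g a * S) has_sum s * S) A"
    using has_sum_cmult_left[OF assms(1)] .
  have sm: "(\<lambda>(a,b). g a * h b) summable_on Sigma A (\<lambda>_. B)"
    by (rule summable_on_SigmaI[OF inner]) (use outer assms in \<open>auto simp: summable_on_def\<close>)
  show ?thesis using has_sum_SigmaI[OF inner outer sm] by simp
qed

lemma has_sum_lists_len:
  fixes g :: "_ \<Rightarrow> real"
  assumes "(g has_sum s) A" "\<And>a. a \<in> A \<Longrightarrow> g a \<ge> 0"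
  shows "((\<lambda>ts. prod_list (map g ts)) has_sum s ^ k) {ts. set ts \<subseteq> A \<and> length ts = k}"
proof (induction k)
  case 0
  have "{ts. set ts \<subseteq> A \<and> length ts = 0} = {[]}" by auto
  moreover have "((\<lambda>ts. prod_list (map g ts)) has_sum 1) {[]}"
    using has_sum_finite[of "{[]}" "\<lambda>ts. prod_list (map g ts)"] by simp
  ultimately show ?case by simp
next
  case (Suc k)
  have "((\<lambda>(a,b). g a * prod_list (map g b)) has_sum (s * s^k)) (A \<times> {ts. set ts \<subseteq> A \<and> length ts = k})"
    by (rule has_sum_prod_nonneg[OF assms(1) Suc.IH assms(2)]) (auto intro!: prod_list_nonneg assms(2))
  moreover have "bij_betw (\<lambda>(a,b). a # b) (A \<times> {ts. set ts \<subseteq> A \<and> length ts = k}) {ts. set ts \<subseteq> A \<and> length ts = Suc k}"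
    by (rule bij_betwI[where g="\<lambda>ts. (hd ts, tl ts)"]) (auto simp: length_Suc_conv)
  ultimately show ?case
    using has_sum_reindex_bij_betw[of "\<lambda>(a,b). a # b", where f="\<lambda>ts. prod_list (map g ts)"]
    by (simp add: case_prod_unfold)
qed

lemma has_sum_lists:
  fixes g :: "_ \<Rightarrow> real"
  assumes "(g has_sum s) A" "\<And>a. a \<in> A \<Longrightarrow> g a \<ge> 0" "s < 1"
  shows "((\<lambda>ts. prod_list (map g ts)) has_sum 1 / (1 - s)) {ts. set ts \<subseteq> A}"
proof -
  have s0: "s \<ge> 0" using has_sum_nonneg assms by blast
  let ?L = "\<lambda>k. {ts. set ts \<subseteq> A \<and> length ts = k}"
  let ?f = "\<lambda>p. prod_list (map g (snd p))"
  have inner: "\<And>k. k \<in> UNIV \<Longrightarrow> ((\<lambda>ts. ?f (k, ts)) has_sum s ^ k) (?L k)"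
    using has_sum_lists_len[OF assms(1,2)] by simp
  have outer: "((\<lambda>k. s ^ k) has_sum 1 / (1 - s)) UNIV"
    using geometric_sums[of s] s0 assms(3)
    by (intro sums_nonneg_imp_has_sum) auto
  have sm: "?f summable_on Sigma UNIV ?L"
    by (rule summable_on_SigmaI[OF inner]) (use outer s0 in \<open>auto simp: summable_on_def intro!: prod_list_nonneg assms(2)\<close>)
  have "(?f has_sum 1 / (1 - s)) (Sigma UNIV ?L)"
    using has_sum_SigmaI[OF inner outer sm] .
  moreover have "bij_betw snd (Sigma UNIV ?L) {ts. set ts \<subseteq> A}"
    by (rule bij_betwI[where g="\<lambda>ts. (length ts, ts)"]) auto
  ultimately show ?thesis
    using has_sum_reindex_bij_betw[of snd "Sigma UNIV ?L" "{ts. set ts \<subseteq> A}" "\<lambda>ts. prod_list (map g ts)"]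
    by simp
qed




lemma height_Suc_set: "{t. height t \<le> Suc n} = Node ` {ts. set ts \<subseteq> {t. height t \<le> n}}"
proof (intro set_eqI iffI)
  fix t assume h: "t \<in> {t. height t \<le> Suc n}"
  obtain ts where t: "t = Node ts" by (cases t)
  with h have "\<forall>u\<in>set ts. height u \<le> n" using height_Node_le by (metis mem_Collect_eq)
  then show "t \<in> Node ` {ts. set ts \<subseteq> {t. height t \<le> n}}" using t by auto
qed (use height_Node_le in \<open>auto simp del: height.simps\<close>)

lemma gf:
  fixes x :: real
  assumes "0 \<le> x" "real n * x < 1"
  shows "((\<lambda>t. (1/4::real) ^ edges t * (2*(1+x)) ^ level_count n t) has_sum
          (2 * (1 - (real n - 1) * x) / (1 - real n * x))) {t. height t \<le> n}"
  using assms
proof (induction n arbitrary: x)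
  case 0
  have "{t. height t \<le> 0} = {Node []}" using height_le_0 by auto
  then show ?case using has_sum_finite[of "{Node []}" "\<lambda>t. (1/4::real) ^ edges t * (2*(1+x)) ^ level_count 0 t"] by simp
next
  case (Suc n)
  let ?y = "2*(1+x)"
  let ?U = "2 * (1 - (real n - 1) * x) / (1 - real n * x)"
  have nx: "real n * x < 1" using Suc.prems by (auto simp: algebra_simps)
  have IH: "((\<lambda>t. (1/4::real) ^ edges t * ?y ^ level_count n t) has_sum ?U) {t. height t \<le> n}"
    using Suc.IH[OF Suc.prems(1) nx] .
  have g: "((\<lambda>t. (1/4) * ((1/4::real) ^ edges t * ?y ^ level_count n t)) has_sum (1/4 * ?U)) {t. height t \<le> n}"
    using has_sum_cmult_right[OF IH, of "1/4"] .
  have pos: "1 - real n * x > 0" using nx by simp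
  have lt: "1/4 * ?U < 1"
  proof -
    have "2 * (1 - (real n - 1) * x) < 4 * (1 - real n * x)"
      using Suc.prems(2) by (simp add: algebra_simps)
    then show ?thesis using pos by (simp add: field_simps)
  qed
  have L: "((\<lambda>ts. prod_list (map (\<lambda>t. (1/4) * ((1/4::real) ^ edges t * ?y ^ level_count n t)) ts)) has_sum 1 / (1 - 1/4 * ?U))
      {ts. set ts \<subseteq> {t. height t \<le> n}}"
    by (rule has_sum_lists[OF g _ lt]) (use Suc.prems(1) in simp)
  have val: "1 / (1 - 1/4 * ?U) = 2 * (1 - (real (Suc n) - 1) * x) / (1 - real (Suc n) * x)"
  proof -
    have p2: "1 - real (Suc n) * x > 0" using Suc.prems(2) by simp
    show ?thesis using pos p2 by (simp add: field_simps)
  qed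
  have "((\<lambda>ts. (1/4::real) ^ edges (Node ts) * ?y ^ level_count (Suc n) (Node ts)) has_sum 1 / (1 - 1/4 * ?U))
      {ts. set ts \<subseteq> {t. height t \<le> n}}"
    using L by (simp only: weight_Node)
  moreover have "bij_betw Node {ts. set ts \<subseteq> {t. height t \<le> n}} {t. height t \<le> Suc n}"
    unfolding height_Suc_set by (rule bij_betw_imageI) (auto simp: inj_on_def)
  ultimately show ?case
    using has_sum_reindex_bij_betw[of Node "{ts. set ts \<subseteq> {t. height t \<le> n}}" "{t. height t \<le> Suc n}"
       "\<lambda>t. (1/4::real) ^ edges t * ?y ^ level_count (Suc n) t"] val by simp
qed




lemma powser_unique_nonneg:
  fixes a b :: "nat \<Rightarrow> real"
  assumes s: "s > 0" and a0: "\<And>R. a R \<ge> 0" and b0: "\<And>R. b R \<ge> 0"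
    and sa: "\<And>x. 0 < x \<Longrightarrow> x < s \<Longrightarrow> (\<lambda>R. a R * x^R) sums f x"
    and sb: "\<And>x. 0 < x \<Longrightarrow> x < s \<Longrightarrow> (\<lambda>R. b R * x^R) sums f x"
  shows "a k = b k"
proof (induction k rule: less_induct)
  case (less k)
  define d where "d = (\<lambda>R. a R - b R)"
  define e where "e = (\<lambda>R. d (R + k))"
  have dk: "\<And>j. j < k \<Longrightarrow> d j = 0" using less by (simp add: d_def)
  have sd: "(\<lambda>R. d R * x^R) sums 0" if "0 < x" "x < s" for x
    using sums_diff[OF sa[OF that] sb[OF that]] by (simp add: d_def algebra_simps)
  have se: "(\<lambda>R. e R * x^R) sums 0" if x: "0 < x" "x < s" for x
  proof -
    have "(\<lambda>R. d (R + k) * x^(R + k)) sums (0 - (\<Sum>i<k. d i * x^i))"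
      using sums_split_initial_segment[OF sd[OF x]] .
    then have "(\<lambda>R. d (R + k) * x^(R + k)) sums 0" using dk by simp
    then have "(\<lambda>R. d (R + k) * x^(R + k) / x^k) sums (0 / x^k)" by (rule sums_divide)
    moreover have "(\<lambda>R. d (R + k) * x^(R + k) / x^k) = (\<lambda>R. e R * x^R)"
    proof
      fix R
      have "x^k \<noteq> 0" using x by simp
      then show "d (R + k) * x^(R + k) / x^k = e R * x^R"
        unfolding e_def power_add by (metis mult.assoc nonzero_mult_div_cancel_right)
    qed
    ultimately show ?thesis by simp
  qed
  have summ_ab: "summable (\<lambda>R. (a R + b R) * y^R)" if "0 < y" "y < s" for y
    using sums_add[OF sa[OF that] sb[OF that]] by (simp add: sums_iff algebra_simps)
  have conv: "(\<lambda>R. e R * x^R) sums (\<Sum>R. e R * x^R)" if "x \<noteq> 0" "norm x < s" for x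
  proof -
    have y: "0 < \<bar>x\<bar>" "\<bar>x\<bar> < s" using that by auto
    have "summable (\<lambda>R. (a (R + k) + b (R + k)) * \<bar>x\<bar>^(R + k))"
      using summable_ignore_initial_segment[OF summ_ab[OF y], of k] .
    then have "summable (\<lambda>R. (a (R + k) + b (R + k)) * \<bar>x\<bar>^(R + k) / \<bar>x\<bar>^k)"
      by (rule summable_divide)
    have S: "summable (\<lambda>R. (a (R + k) + b (R + k)) * \<bar>x\<bar>^R)"
    proof -
      have xk: "\<bar>x\<bar>^k \<noteq> 0" by (rule power_not_zero) (use y in linarith)
      have "\<And>R. (a (R + k) + b (R + k)) * \<bar>x\<bar>^(R + k) / \<bar>x\<bar>^k = (a (R + k) + b (R + k)) * \<bar>x\<bar>^R"
        unfolding power_add using xk by (metis mult.assoc nonzero_mult_div_cancel_right)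
      then show ?thesis using \<open>summable (\<lambda>R. (a (R + k) + b (R + k)) * \<bar>x\<bar>^(R + k) / \<bar>x\<bar>^k)\<close> by simp
    qed
    have NS: "summable (\<lambda>R. norm (e R * x^R))"
    proof (rule summable_comparison_test'[OF S])
      fix R
      have "\<bar>d (R+k)\<bar> \<le> a (R + k) + b (R + k)" using a0 b0 by (simp add: d_def abs_le_iff)
      then show "norm (norm (e R * x^R)) \<le> (a (R + k) + b (R + k)) * \<bar>x\<bar>^R"
        by (simp add: e_def abs_mult power_abs mult_right_mono)
    qed
    show ?thesis using summable_sums[OF summable_norm_cancel[OF NS]] .
  qed
  have lim: "((\<lambda>x. \<Sum>R. e R * x^R) \<longlongrightarrow> e 0) (at 0)"
    by (rule powser_limit_0_strong[OF s conv])
  then have lim1: "((\<lambda>x. \<Sum>R. e R * x^R) \<longlongrightarrow> e 0) (at_right 0)"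
    by (rule filterlim_mono) (simp_all add: at_le)
  have ev: "eventually (\<lambda>x. (\<Sum>R. e R * x^R) = 0) (at_right (0::real))"
    unfolding eventually_at_right_field
  proof (intro exI[of _ s] conjI allI impI)
    fix y :: real assume "0 < y" "y < s"
    then show "(\<Sum>R. e R * y^R) = 0" using sums_unique[OF se[of y]] by simp
  qed (use s in simp)
  have lim2: "((\<lambda>x. \<Sum>R. e R * x^R) \<longlongrightarrow> 0) (at_right 0)"
    by (rule tendsto_eventually[OF ev])
  have "e 0 = 0" using tendsto_unique[OF trivial_limit_at_right_real lim1 lim2] .
  then show ?case by (simp add: e_def d_def)
qed




lemma binom_has_sum:
  fixes x :: real
  shows "((\<lambda>R. real (K choose R) * x^R) has_sum (1+x)^K) UNIV"
proof -
  have "(1+x)^K = (\<Sum>R\<le>K. real (K choose R) * x^R)"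
    using binomial_ring[of x 1 K] by (simp add: add.commute)
  then have "((\<lambda>R. real (K choose R) * x^R) has_sum (1+x)^K) {..K}" by simp
  then show ?thesis
    by (rule has_sum_cong_neutral[THEN iffD1, rotated -1]) auto
qed

definition Mc :: "nat \<Rightarrow> nat \<Rightarrow> real" where
  "Mc n R = infsum (\<lambda>t. (1/4::real) ^ edges t * 2 ^ level_count n t * real (level_count n t choose R)) {t. height t \<le> n}"

lemma fub:
  fixes x :: real
  assumes x: "0 < x" "real n * x < 1"
  shows "((\<lambda>t. (1/4::real) ^ edges t * 2 ^ level_count n t * real (level_count n t choose R)) has_sum Mc n R) {t. height t \<le> n}"
    and "((\<lambda>R. Mc n R * x^R) has_sum (2 * (1 - (real n - 1) * x) / (1 - real n * x))) UNIV"
proof -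
  let ?A = "{t. height t \<le> n}"
  let ?U = "2 * (1 - (real n - 1) * x) / (1 - real n * x)"
  define f where "f = (\<lambda>(t,R). (1/4::real) ^ edges t * 2 ^ level_count n t * real (level_count n t choose R) * x^R)"
  have inner: "((\<lambda>R. f (t, R)) has_sum (1/4::real) ^ edges t * (2*(1+x)) ^ level_count n t) UNIV" if "t \<in> ?A" for t
  proof -
    have "((\<lambda>R. ((1/4::real) ^ edges t * 2 ^ level_count n t) * (real (level_count n t choose R) * x^R)) has_sum
        ((1/4::real) ^ edges t * 2 ^ level_count n t) * (1+x)^level_count n t) UNIV"
      by (rule has_sum_cmult_right[OF binom_has_sum])
    moreover have e: "(2*(1+x))^K = 2^K*(1+x)^K" for K :: nat by (simp only: power_mult_distrib)
    ultimately show ?thesis unfolding e by (simp add: f_def mult.assoc)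
  qed
  have outer: "((\<lambda>t. (1/4::real) ^ edges t * (2*(1+x)) ^ level_count n t) has_sum ?U) ?A"
    using gf[of x n] x by simp
  have f0: "\<And>t R. f (t,R) \<ge> 0" using x by (simp add: f_def)
  have sm: "f summable_on Sigma ?A (\<lambda>_. UNIV)"
    by (rule summable_on_SigmaI[OF inner]) (use outer f0 in \<open>auto simp: summable_on_def\<close>)
  have tot: "(f has_sum ?U) (Sigma ?A (\<lambda>_. UNIV))"
    using has_sum_SigmaI[OF inner outer sm] .
  have tot': "((\<lambda>(R,t). f (t,R)) has_sum ?U) (UNIV \<times> ?A)"
    using has_sum_swap[THEN iffD1, OF tot] .
  then have sm': "(\<lambda>(R,t). f (t,R)) summable_on Sigma UNIV (\<lambda>_. ?A)" by (auto simp: summable_on_def)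
  have smR: "(\<lambda>t. f (t,R)) summable_on ?A" for R
    using summable_on_SigmaD1[of "\<lambda>R t. f (t,R)" UNIV "\<lambda>_. ?A" R] sm' by simp
  have sc: "((\<lambda>t. (1/4::real) ^ edges t * 2 ^ level_count n t * real (level_count n t choose R)) has_sum Mc n R) ?A" for R
  proof -
    have "(\<lambda>t. f (t,R) * (1 / x^R)) summable_on ?A" using smR by (rule summable_on_cmult_left)
    moreover have "(\<lambda>t. f (t,R) * (1 / x^R)) = (\<lambda>t. (1/4::real) ^ edges t * 2 ^ level_count n t * real (level_count n t choose R))"
      using x by (auto simp: f_def)
    ultimately have "(\<lambda>t. (1/4::real) ^ edges t * 2 ^ level_count n t * real (level_count n t choose R)) summable_on ?A"
      by simp
    then show ?thesis unfolding Mc_def by (rule has_sum_infsum)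
  qed
  then show "((\<lambda>t. (1/4::real) ^ edges t * 2 ^ level_count n t * real (level_count n t choose R)) has_sum Mc n R) ?A" .
  have inR: "((\<lambda>t. (\<lambda>(R,t). f (t,R)) (R, t)) has_sum Mc n R * x^R) ?A" if "R \<in> UNIV" for R
    using has_sum_cmult_left[OF sc[of R], of "x^R"] by (simp add: f_def)
  show "((\<lambda>R. Mc n R * x^R) has_sum ?U) UNIV"
    using has_sum_SigmaD[OF _ inR] tot' by simp
qed




lemma Mc_val: "Mc n R = (if R = 0 then 2 else 2 * real n ^ (R - 1))"
proof -
  define c where "c = (\<lambda>R. if R = 0 then 2 else 2 * real n ^ (R - 1))"
  define s where "s = 1 / (real n + 1)"
  define F where "F = (\<lambda>x::real. 2 * (1 - (real n - 1) * x) / (1 - real n * x))"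
  have s: "s > 0" by (simp add: s_def)
  have nx: "real n * x < 1" if "0 < x" "x < s" for x
  proof -
    have "x * (real n + 1) < 1" using that by (simp add: s_def field_simps)
    then show ?thesis using that by (simp add: algebra_simps)
  qed
  have sa: "(\<lambda>R. Mc n R * x^R) sums F x" if "0 < x" "x < s" for x
    using has_sum_imp_sums[OF fub(2)[OF \<open>0 < x\<close> nx[OF that]]] by (simp add: F_def)
  have sb: "(\<lambda>R. c R * x^R) sums F x" if "0 < x" "x < s" for x
  proof -
    have nx1: "norm (real n * x) < 1" using nx[OF that] that by simp
    have "(\<lambda>j. (2*x) * (real n * x)^j) sums ((2*x) * (1 / (1 - real n * x)))"
      using sums_mult[OF geometric_sums[OF nx1], of "2*x"] by simp
    moreover have "(\<lambda>j. c (Suc j) * x^(Suc j)) = (\<lambda>j. (2*x) * (real n * x)^j)"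
      by (simp add: c_def power_mult_distrib fun_eq_iff)
    ultimately have "(\<lambda>j. c (Suc j) * x^(Suc j)) sums ((2*x) * (1 / (1 - real n * x)))" by simp
    then have "(\<lambda>R. c R * x^R) sums ((2*x) * (1 / (1 - real n * x)) + c 0 * x^0)"
      by (subst (asm) sums_Suc_iff)
    moreover have "(2*x) * (1 / (1 - real n * x)) + c 0 * x^0 = F x"
      using nx[OF that] by (simp add: c_def F_def field_simps)
    ultimately show ?thesis by simp
  qed
  have a0: "Mc n R \<ge> 0" for R
    unfolding Mc_def by (rule infsum_nonneg) simp
  have b0: "c R \<ge> 0" for R by (simp add: c_def)
  show ?thesis using powser_unique_nonneg[OF s a0 b0 sa sb, of R] by (simp add: c_def)
qed




definition gK :: "real \<Rightarrow> nat \<Rightarrow> real" where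
  "gK \<mu> K = (\<Sum>R = 1..K. real (K choose R) * \<mu> ^ (R - 1) / fact (R - 1))"

lemma exp_has_sum_shift:
  fixes z :: real assumes z: "z \<ge> 0"
  shows "((\<lambda>R. z ^ (R - 1) / fact (R - 1)) has_sum exp z) {1..}"
proof -
  have "(\<lambda>k. z ^ k / fact k) sums exp z"
    using exp_converges[of z] by (simp add: divide_inverse mult.commute)
  then have "((\<lambda>k. z ^ k / fact k) has_sum exp z) UNIV"
    by (rule sums_nonneg_imp_has_sum) (use z in simp)
  moreover have "bij_betw (\<lambda>R. R - 1) {1::nat..} UNIV"
    by (rule bij_betwI[where g=Suc]) auto
  ultimately show ?thesis
    using has_sum_reindex_bij_betw[of "\<lambda>R. R - 1" "{1::nat..}" UNIV "\<lambda>k. z ^ k / fact k"] by simp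
qed

lemma G:
  fixes \<mu> :: real assumes mu: "\<mu> > 0"
  shows "((\<lambda>t. (1/4::real) ^ edges t * 2 ^ level_count n t * gK \<mu> (level_count n t)) has_sum
     2 * exp (real n * \<mu>)) {t. height t \<le> n}"
proof -
  let ?A = "{t. height t \<le> n}"
  let ?B = "{1::nat..}"
  define h where "h = (\<lambda>(R, t). (1/4::real) ^ edges t * 2 ^ level_count n t * real (level_count n t choose R)
      * (\<mu> ^ (R - 1) / fact (R - 1)))"
  define x0 where "x0 = 1 / (2 * (real n + 1))"
  have x0: "0 < x0" "real n * x0 < 1" by (auto simp: x0_def field_simps)
  have inner: "((\<lambda>t. h (R, t)) has_sum Mc n R * (\<mu> ^ (R - 1) / fact (R - 1))) ?A" if "R \<in> ?B" for R
    using has_sum_cmult_left[OF fub(1)[OF x0, of R], of "\<mu> ^ (R - 1) / fact (R - 1)"] by (simp only: h_def case_prod_conv)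
  have outer: "((\<lambda>R. Mc n R * (\<mu> ^ (R - 1) / fact (R - 1))) has_sum 2 * exp (real n * \<mu>)) ?B"
  proof -
    have "((\<lambda>R. 2 * ((real n * \<mu>) ^ (R - 1) / fact (R - 1))) has_sum 2 * exp (real n * \<mu>)) ?B"
      by (rule has_sum_cmult_right[OF exp_has_sum_shift]) (use mu in simp)
    moreover have "\<And>R. R \<in> ?B \<Longrightarrow> Mc n R * (\<mu> ^ (R - 1) / fact (R - 1)) = 2 * ((real n * \<mu>) ^ (R - 1) / fact (R - 1))"
      by (auto simp: Mc_val power_mult_distrib)
    ultimately show ?thesis using has_sum_cong by (metis (no_types, lifting))
  qed
  have h0: "\<And>p. h p \<ge> 0" using mu by (auto simp: h_def)
  have sm: "h summable_on Sigma ?B (\<lambda>_. ?A)"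
    by (rule summable_on_SigmaI[OF inner]) (use outer h0 in \<open>auto simp: summable_on_def\<close>)
  have tot: "(h has_sum 2 * exp (real n * \<mu>)) (?B \<times> ?A)"
    using has_sum_SigmaI[OF inner outer sm] by simp
  have tot': "((\<lambda>(t, R). h (R, t)) has_sum 2 * exp (real n * \<mu>)) (?A \<times> ?B)"
    using has_sum_swap[THEN iffD1, OF tot] .
  have inT: "((\<lambda>R. (\<lambda>(t, R). h (R, t)) (t, R)) has_sum
      (1/4::real) ^ edges t * 2 ^ level_count n t * gK \<mu> (level_count n t)) ?B" if "t \<in> ?A" for t
  proof -
    let ?K = "level_count n t"
    have "((\<lambda>R. h (R, t)) has_sum sum (\<lambda>R. h (R, t)) {1..?K}) {1..?K}" by (rule has_sum_finite) simp
    then have "((\<lambda>R. h (R, t)) has_sum sum (\<lambda>R. h (R, t)) {1..?K}) ?B"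
      by (rule has_sum_cong_neutral[THEN iffD1, rotated -1]) (auto simp: h_def)
    moreover have "sum (\<lambda>R. h (R, t)) {1..?K} = (1/4::real) ^ edges t * 2 ^ ?K * gK \<mu> ?K"
      by (simp add: h_def gK_def sum_distrib_left mult.assoc)
    ultimately show ?thesis by simp
  qed
  show ?thesis using has_sum_SigmaD[OF tot' inT] .
qed




theorem mainTheorem12:
  fixes \<mu> :: real and r :: nat
  assumes "\<mu> > 0" and "r \<ge> 1"
  shows "(Xi \<mu> has_sum 1) {T. planted T \<and> height T = r}"
proof -
  obtain n where r: "r = Suc n" using assms(2) by (cases r) auto
  let ?f = "\<lambda>t. (1/4::real) ^ edges t * 2 ^ level_count n t * gK \<mu> (level_count n t)"
  have G1: "(?f has_sum 2 * exp (real n * \<mu>)) {t. height t \<le> n}" using G[OF assms(1)] .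
  have G2: "(?f has_sum 2 * exp (real n * \<mu>)) {t. height t = n}"
  proof (rule has_sum_cong_neutral[THEN iffD1, OF _ _ _ G1])
    fix t assume "t \<in> {t. height t \<le> n} - {t. height t = n}"
    then have "level_count n t = 0" by (intro level_lt) auto
    then show "?f t = 0" by (simp add: gK_def)
  qed auto
  have G3: "((\<lambda>t. (exp (- \<mu> * real n) / 2) * ?f t) has_sum 1) {t. height t = n}"
    using has_sum_cmult_right[OF G2, of "exp (- \<mu> * real n) / 2"]
    by (simp add: exp_minus field_simps mult.commute)
  have Xi_eq: "Xi \<mu> (Node [t]) = (exp (- \<mu> * real n) / 2) * ?f t" if "height t = n" for t
    using that by (simp add: Xi_def r gK_def Let_def field_simps)
  have bij: "bij_betw (\<lambda>t. Node [t]) {t. height t = n} {T. planted T \<and> height T = r}"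
    by (rule bij_betwI[where g="\<lambda>T. case T of Node ts \<Rightarrow> hd ts"]) (auto simp: planted_def r)
  have "((\<lambda>t. Xi \<mu> (Node [t])) has_sum 1) {t. height t = n}"
    using has_sum_cong[of "{t. height t = n}" "\<lambda>t. Xi \<mu> (Node [t])" "\<lambda>t. (exp (- \<mu> * real n) / 2) * ?f t"] G3 Xi_eq
    by blast
  then show ?thesis using has_sum_reindex_bij_betw[OF bij, of "Xi \<mu>"] by blast
qed


end
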